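(* For every $V>0$ and every $x=(x_1,x_2,x_3)\in\Omega_V$, at least one coordinate satisfies $|x_i|<1$.
   Context: $f(x,y,z)=(2xy-z,x,y)$ on $\mathbb{R}^3$; $I(x,y,z)=x^2+y^2+z^2-2xyz-1$; $S_V=\{I=V\}$; for $V>0$, $\Omega_V=\{p\in S_V:\{f^n(p)\}_{n\in\mathbb{Z}}\text{ is bounded}\}$. *)

theory Defs
  imports "HOL-Analysis.Analysis"
begin

type_synonym pt = "real \<times> real \<times> real"

definition fmap :: "pt \<Rightarrow> pt" where
  "fmap p = (case p of (x, y, z) \<Rightarrow> (2 * x * y - z, x, y))"

definition fmap_inv :: "pt \<Rightarrow> pt" where
  "fmap_inv p = (case p of (a, b, c) \<Rightarrow> (b, c, 2 * b * c - a))"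

definition fiter :: "int \<Rightarrow> pt \<Rightarrow> pt" where
  "fiter n = (if n \<ge> 0 then fmap ^^ nat n else fmap_inv ^^ nat (- n))"

definition Iinv :: "pt \<Rightarrow> real" where
  "Iinv p = (case p of (x, y, z) \<Rightarrow> x^2 + y^2 + z^2 - 2 * x * y * z - 1)"

definition S_level :: "real \<Rightarrow> pt set" where
  "S_level V = {p. Iinv p = V}"

definition Omega :: "real \<Rightarrow> pt set" where
  "Omega V = {p \<in> S_level V. bounded (range (\<lambda>n::int. fiter n p))}"

end

theory Submission
  imports Defs
begin

definition Qp :: "pt \<Rightarrow> bool" where
  "Qp p = (case p of (x,y,z) \<Rightarrow> \<bar>x\<bar> \<ge> 1 \<and> \<bar>y\<bar> \<ge> 1 \<and> x*y*z \<le> \<bar>x*y\<bar>*\<bar>x\<bar>)"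

definition Rp :: "pt \<Rightarrow> bool" where
  "Rp p = (case p of (x,y,z) \<Rightarrow> \<bar>x\<bar> \<ge> \<bar>y\<bar> \<and> \<bar>y\<bar> \<ge> \<bar>z\<bar> \<and> \<bar>z\<bar> \<ge> 1 \<and> x*y*z \<ge> 0)"

lemma Qstep:
  fixes x y z :: real
  assumes "\<bar>x\<bar> \<ge> 1" "\<bar>y\<bar> \<ge> 1" "x*y*z \<le> \<bar>x*y\<bar>*\<bar>x\<bar>"
  shows "(2*x*y - z)*x*y \<ge> \<bar>x*y\<bar>*(2*\<bar>x\<bar>*\<bar>y\<bar> - \<bar>x\<bar>)"
    and "\<bar>2*x*y - z\<bar> \<ge> 2*\<bar>x\<bar>*\<bar>y\<bar> - \<bar>x\<bar>"
proof -
  have e: "(2*x*y - z)*x*y = 2*(x*y)^2 - x*y*z" by algebra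
  have "(x*y)^2 = \<bar>x*y\<bar>*(\<bar>x\<bar>*\<bar>y\<bar>)" by (simp add: power2_eq_square abs_mult)
  then show 1: "(2*x*y - z)*x*y \<ge> \<bar>x*y\<bar>*(2*\<bar>x\<bar>*\<bar>y\<bar> - \<bar>x\<bar>)"
    using e assms(3) by (simp add: algebra_simps)
  have "\<bar>2*x*y - z\<bar> * \<bar>x*y\<bar> \<ge> (2*x*y - z)*x*y"
    by (metis abs_ge_self abs_mult mult.assoc)
  with 1 have "\<bar>x*y\<bar> * \<bar>2*x*y - z\<bar> \<ge> \<bar>x*y\<bar>*(2*\<bar>x\<bar>*\<bar>y\<bar> - \<bar>x\<bar>)" by (simp add: mult.commute)
  moreover have "\<bar>x*y\<bar> > 0" using assms by (auto simp: abs_mult)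
  ultimately show "\<bar>2*x*y - z\<bar> \<ge> 2*\<bar>x\<bar>*\<bar>y\<bar> - \<bar>x\<bar>" by simp
qed

lemma big: fixes a b :: real assumes "a \<ge> 1" "b \<ge> 1"
  shows "2*a*b - a \<ge> a" "2*a*b - a \<ge> b"
proof -
  have "a*(b-1) \<ge> 0" "b*(a-1) \<ge> 0" using assms by auto
  then show "2*a*b - a \<ge> a" "2*a*b - a \<ge> b" by (auto simp: algebra_simps)
qed

lemma Q_fmap:
  assumes "Qp p"
  shows "Qp (fmap p)" "snd (snd (fmap p)) * fst (fmap p) * fst (snd (fmap p)) \<ge> 0 \<and> \<bar>fst (fmap p)\<bar> \<ge> \<bar>fst (snd (fmap p))\<bar>"
proof -
  obtain x y z where p: "p = (x,y,z)" by (cases p) auto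
  have a: "\<bar>x\<bar> \<ge> 1" "\<bar>y\<bar> \<ge> 1" "x*y*z \<le> \<bar>x*y\<bar>*\<bar>x\<bar>" using assms p by (auto simp: Qp_def)
  define w where "w = 2*x*y - z"
  have f: "fmap p = (w,x,y)" by (simp add: p fmap_def w_def)
  note s = Qstep[OF a, folded w_def]
  have b: "2*\<bar>x\<bar>*\<bar>y\<bar> - \<bar>x\<bar> \<ge> \<bar>x\<bar>" "2*\<bar>x\<bar>*\<bar>y\<bar> - \<bar>x\<bar> \<ge> \<bar>y\<bar>" using big[of "\<bar>x\<bar>" "\<bar>y\<bar>"] a by auto
  have wa: "\<bar>w\<bar> \<ge> \<bar>x\<bar>" "\<bar>w\<bar> \<ge> \<bar>y\<bar>" using s b by linarith+
  have "\<bar>x*y\<bar>*(2*\<bar>x\<bar>*\<bar>y\<bar> - \<bar>x\<bar>) \<ge> 0" using b a by auto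
  hence wxy: "w*x*y \<ge> 0" using s by linarith
  have "w*x*y \<le> \<bar>w*x\<bar>*\<bar>w\<bar>"
  proof -
    have "w*x*y \<le> \<bar>w\<bar>*\<bar>x\<bar>*\<bar>y\<bar>" by (metis abs_ge_self abs_mult)
    also have "\<dots> \<le> \<bar>w\<bar>*\<bar>x\<bar>*\<bar>w\<bar>" using wa by (simp add: mult_left_mono)
    finally show ?thesis by (simp add: abs_mult)
  qed
  then show "Qp (fmap p)" using f a wa by (auto simp: Qp_def)
  show "snd (snd (fmap p)) * fst (fmap p) * fst (snd (fmap p)) \<ge> 0 \<and> \<bar>fst (fmap p)\<bar> \<ge> \<bar>fst (snd (fmap p))\<bar>"
    using f wxy wa by (simp add: mult.commute mult.left_commute)
qed

lemma R_Q: "Rp p \<Longrightarrow> Qp p"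
proof -
  assume r: "Rp p"
  obtain x y z where p: "p = (x,y,z)" by (cases p) auto
  have a: "\<bar>x\<bar> \<ge> \<bar>y\<bar>" "\<bar>y\<bar> \<ge> \<bar>z\<bar>" "\<bar>z\<bar> \<ge> 1" "x*y*z \<ge> 0" using r p by (auto simp: Rp_def)
  have "x*y*z \<le> \<bar>x*y*z\<bar>" by simp
  also have "\<dots> = \<bar>x*y\<bar>*\<bar>z\<bar>" by (simp add: abs_mult)
  also have "\<dots> \<le> \<bar>x*y\<bar>*\<bar>x\<bar>" using a by (intro mult_left_mono) auto
  finally show "Qp p" using a p by (auto simp: Qp_def)
qed

lemma R_fmap: assumes "Rp p" shows "Rp (fmap p)"
proof -
  obtain x y z where p: "p = (x,y,z)" by (cases p) auto
  have q: "Qp p" using R_Q assms by auto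
  have a: "\<bar>x\<bar> \<ge> \<bar>y\<bar>" "\<bar>y\<bar> \<ge> \<bar>z\<bar>" "\<bar>z\<bar> \<ge> 1" using assms p by (auto simp: Rp_def)
  from Q_fmap(2)[OF q] show ?thesis using a p by (auto simp: Rp_def fmap_def mult.commute mult.left_commute)
qed

lemma Q_R: assumes "Qp p" shows "Rp (fmap (fmap p))"
proof -
  obtain w x y where f: "fmap p = (w,x,y)" by (cases "fmap p") auto
  have q1: "Qp (fmap p)" using Q_fmap assms by auto
  from Q_fmap(2)[OF assms] f have h1: "\<bar>w\<bar> \<ge> \<bar>x\<bar>" by auto
  from q1 f have h2: "\<bar>x\<bar> \<ge> 1" by (auto simp: Qp_def)
  obtain w' where f2: "fmap (fmap p) = (w',w,x)" by (simp add: f fmap_def[of "(w,x,y)"])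
  from Q_fmap[OF q1] f2 show ?thesis using h1 h2
    by (auto simp: Rp_def mult.commute mult.left_commute)
qed

lemma I_fmap: "Iinv (fmap p) = Iinv p"
  by (cases p) (simp add: Iinv_def fmap_def power2_eq_square algebra_simps)

lemma growth:
  assumes "Rp p" "Iinv p = V" "V > 0"
  shows "\<bar>fst (fmap p)\<bar> \<ge> \<bar>snd (snd p)\<bar> + 2 * sqrt V"
proof -
  obtain x y z where p: "p = (x,y,z)" by (cases p) auto
  have a: "\<bar>x\<bar> \<ge> \<bar>y\<bar>" "\<bar>y\<bar> \<ge> \<bar>z\<bar>" "\<bar>z\<bar> \<ge> 1" "x*y*z \<ge> 0" using assms p by (auto simp: Rp_def)
  have q: "Qp p" using R_Q assms by auto
  hence qa: "\<bar>x\<bar> \<ge> 1" "\<bar>y\<bar> \<ge> 1" "x*y*z \<le> \<bar>x*y\<bar>*\<bar>x\<bar>" using p by (auto simp: Qp_def)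
  define w where "w = 2*x*y - z"
  define A where "A = \<bar>x\<bar>" define B where "B = \<bar>y\<bar>" define C where "C = \<bar>z\<bar>"
  have xyz: "x*y*z = A*B*C" using a(4) by (simp add: A_def B_def C_def abs_mult[symmetric])
  have wxy0: "w*x*y \<ge> 0" using Q_fmap(2)[OF q] by (simp add: p fmap_def w_def mult.commute mult.left_commute)
  have "w*x*y = 2*(x*y)^2 - x*y*z" by (simp add: w_def power2_eq_square algebra_simps)
  also have "(x*y)^2 = (A*B)^2" by (simp add: A_def B_def abs_mult[symmetric])
  finally have e1: "w*x*y = 2*(A*B)^2 - A*B*C" using xyz by simp
  have "w*x*y = \<bar>w*x*y\<bar>" using wxy0 by simp
  also have "\<dots> = \<bar>w\<bar>*(A*B)" by (simp add: A_def B_def abs_mult)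
  finally have "\<bar>w\<bar>*(A*B) = (2*A*B - C)*(A*B)" using e1 by (simp add: power2_eq_square algebra_simps)
  moreover have "A*B > 0" using qa by (simp add: A_def B_def)
  ultimately have wabs: "\<bar>w\<bar> = 2*A*B - C" by (metis mult_right_cancel less_irrefl)
  have V: "V = A^2+B^2+C^2 - 2*A*B*C - 1"
    using assms(2) xyz by (simp add: Iinv_def p A_def B_def C_def mult.assoc)
  have "(\<bar>w\<bar> - C)^2 = 4*(V + (A^2-1)*(B^2-1))" unfolding wabs V by (simp add: power2_eq_square algebra_simps)
  moreover have "(A^2-1)*(B^2-1) \<ge> 0" proof -
    have "A^2 \<ge> 1" "B^2 \<ge> 1" using qa one_le_power[of A 2] one_le_power[of B 2] by (simp_all add: A_def B_def)
    thus ?thesis by simp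
  qed
  ultimately have sq: "(2 * sqrt V)^2 \<le> (\<bar>w\<bar> - C)^2" using assms(3) by (simp add: power_mult_distrib del: real_sqrt_pow2 add: real_sqrt_pow2[of V])
  have "\<bar>w\<bar> \<ge> C" unfolding wabs using big[of A B] qa a by (simp add: A_def B_def C_def)
  hence "2 * sqrt V \<le> \<bar>w\<bar> - C" using sq power2_le_imp_le[of "2 * sqrt V" "\<bar>w\<bar> - C"] by linarith
  thus ?thesis by (simp add: p fmap_def w_def C_def)
qed

lemma snd_snd_ff: "snd (snd (fmap (fmap p))) = fst p"
  by (cases p) (simp add: fmap_def)

lemma R_iter: "Rp r \<Longrightarrow> Rp ((fmap ^^ n) r)"
  by (induction n) (auto intro: R_fmap)

lemma I_iter: "Iinv ((fmap ^^ n) r) = Iinv r"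
  by (induction n) (auto simp: I_fmap)

lemma R_grow:
  assumes "Rp r" "Iinv r = V" "V > 0"
  shows "\<bar>fst ((fmap ^^ (3*k)) r)\<bar> \<ge> real k * (2 * sqrt V)"
proof (induction k)
  case 0 thus ?case by simp
next
  case (Suc k)
  define p where "p = (fmap ^^ (3*k)) r"
  have "Rp (fmap (fmap p))" using R_iter[OF assms(1), of "Suc (Suc (3*k))"] by (simp add: p_def)
  moreover have "Iinv (fmap (fmap p)) = V" using I_iter assms(2) by (simp add: p_def I_fmap)
  ultimately have g: "\<bar>fst (fmap (fmap (fmap p)))\<bar> \<ge> \<bar>fst p\<bar> + 2 * sqrt V"
    using growth assms(3) snd_snd_ff by metis
  have "3 * Suc k = Suc (Suc (Suc (3*k)))" by simp
  hence e: "(fmap ^^ (3 * Suc k)) r = fmap (fmap (fmap p))" by (simp only: p_def funpow.simps o_apply)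
  show ?case using g Suc.IH unfolding e p_def[symmetric] by (simp add: algebra_simps)
qed

lemma Q_unbounded:
  assumes "Qp q" "Iinv q = V" "V > 0"
  shows "\<exists>n. \<bar>fst ((fmap ^^ n) q)\<bar> > B"
proof -
  define r where "r = fmap (fmap q)"
  have R: "Rp r" using Q_R assms r_def by simp
  have I: "Iinv r = V" using assms by (simp add: r_def I_fmap)
  have d: "2 * sqrt V > 0" using assms by simp
  obtain k :: nat where k: "real k > B / (2 * sqrt V)" using reals_Archimedean2 by blast
  hence "real k * (2 * sqrt V) > B" using d by (simp add: field_simps)
  moreover have "(fmap ^^ (3*k + 2)) q = (fmap ^^ (3*k)) r"
  proof -
    have "(fmap ^^ (3*k + 2)) q = (fmap ^^ (3*k)) ((fmap ^^ 2) q)" by (simp only: funpow_add o_apply)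
    moreover have "(fmap ^^ 2) q = fmap (fmap q)" by (simp add: numeral_2_eq_2)
    ultimately show ?thesis by (simp only: r_def)
  qed
  ultimately have "\<bar>fst ((fmap ^^ (3*k + 2)) q)\<bar> > B" using R_grow[OF R I assms(3), of k] by (simp only:)
  thus ?thesis by blast
qed

definition rv :: "pt \<Rightarrow> pt" where "rv p = (case p of (a,b,c) \<Rightarrow> (c,b,a))"

lemma inv_rv: "fmap_inv p = rv (fmap (rv p))"
  by (cases p) (simp add: fmap_inv_def fmap_def rv_def algebra_simps)

lemma rv_rv[simp]: "rv (rv p) = p" by (cases p) (simp add: rv_def)

lemma inv_iter: "(fmap_inv ^^ n) p = rv ((fmap ^^ n) (rv p))"
  by (induction n) (auto simp: inv_rv)

lemma norm_fst3: "\<bar>fst (p::pt)\<bar> \<le> norm p"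
  by (cases p) (metis fst_conv norm_fst_le real_norm_def)

lemma norm_thd3: "\<bar>snd (snd (p::pt))\<bar> \<le> norm p"
proof -
  obtain a b c where p: "p = (a,b,c)" by (cases p) auto
  have "norm c \<le> norm (b,c)" by (rule norm_snd_le)
  also have "\<dots> \<le> norm (a,(b,c))" by (rule norm_snd_le)
  finally show ?thesis by (simp add: p)
qed

theorem lemma5p18:
  fixes V x1 x2 x3 :: real
  assumes "V > 0" and "(x1, x2, x3) \<in> Omega V"
  shows "\<bar>x1\<bar> < 1 \<or> \<bar>x2\<bar> < 1 \<or> \<bar>x3\<bar> < 1"
proof (rule ccontr)
  assume "\<not> ?thesis"
  hence a: "\<bar>x1\<bar> \<ge> 1" "\<bar>x2\<bar> \<ge> 1" "\<bar>x3\<bar> \<ge> 1" by auto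
  define p where "p = (x1,x2,x3)"
  have I: "Iinv p = V" and bd: "bounded (range (\<lambda>n::int. fiter n p))"
    using assms(2) by (auto simp: Omega_def S_level_def p_def)
  then obtain B where B: "\<And>n::int. norm (fiter n p) \<le> B" by (auto simp: bounded_iff)
  show False
  proof (cases "Qp p")
    case True
    then obtain n where n: "\<bar>fst ((fmap ^^ n) p)\<bar> > B" using Q_unbounded I assms(1) by blast
    have "fiter (int n) p = (fmap ^^ n) p" by (simp add: fiter_def)
    thus False using B[of "int n"] norm_fst3[of "(fmap ^^ n) p"] n by simp
  next
    case False
    hence "x1*x2*x3 > \<bar>x1*x2\<bar>*\<bar>x1\<bar>" using a by (auto simp: Qp_def p_def)
    moreover have "x1*x2*x3 \<le> \<bar>x1*x2\<bar>*\<bar>x3\<bar>" by (metis abs_ge_self abs_mult)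
    ultimately have "\<bar>x1*x2\<bar>*\<bar>x1\<bar> < \<bar>x1*x2\<bar>*\<bar>x3\<bar>" by linarith
    hence lt: "\<bar>x1\<bar> < \<bar>x3\<bar>" by (metis abs_ge_zero mult_le_cancel_left_pos mult_less_cancel_left not_le)
    have "x3*x2*x1 \<le> \<bar>x3*x2\<bar>*\<bar>x3\<bar>"
    proof -
      have "x3*x2*x1 \<le> \<bar>x3*x2\<bar>*\<bar>x1\<bar>" by (metis abs_ge_self abs_mult)
      also have "\<dots> \<le> \<bar>x3*x2\<bar>*\<bar>x3\<bar>" using lt by (intro mult_left_mono) auto
      finally show ?thesis .
    qed
    hence Q: "Qp (rv p)" using a by (simp add: Qp_def rv_def p_def)
    have Ir: "Iinv (rv p) = V" using I by (simp add: Iinv_def rv_def p_def algebra_simps)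
    obtain n where n: "\<bar>fst ((fmap ^^ n) (rv p))\<bar> > B" using Q_unbounded[OF Q Ir assms(1)] by blast
    have "fiter (- int n) p = (fmap_inv ^^ n) p"
      by (cases "n = 0") (auto simp: fiter_def)
    hence "fiter (- int n) p = rv ((fmap ^^ n) (rv p))" by (simp add: inv_iter)
    moreover have "snd (snd (rv w)) = fst w" for w by (cases w) (simp add: rv_def)
    ultimately show False using B[of "- int n"] norm_thd3[of "fiter (- int n) p"] n by simp
  qed
qed

end
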